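(* Let $M$ be a positive integer. Then for each $n\in\{1,\dots,M\}$, $$\operatorname{diag}\Big(\Big(\tfrac{T_i}{T_i-nT/M}\Big)^{\kappa_i}\Big)Z_{nT/M}=\operatorname{diag}\Big(\Big(\tfrac{T_i}{T_i-(n-1)T/M}\Big)^{\kappa_i}\Big)Z_{(n-1)T/M}+\operatorname{diag}(\phi_{n,i})\,m+\varepsilon_{n,Z},$$ where, for $i\in\{1,\dots,N\}$, $$\phi_{n,i}:=\begin{cases}\dfrac{T_i^{\kappa_i}}{\kappa_i-1}\Big(\big(T_i-\tfrac{nT}{M}\big)^{1-\kappa_i}-\big(T_i-\tfrac{(n-1)T}{M}\big)^{1-\kappa_i}\Big),&\kappa_i\in(0,1)\cup(1,\infty),\\[1ex] T_i\ln\Big(\dfrac{T_i-(n-1)T/M}{T_i-nT/M}\Big),&\kappa_i=1,\end{cases}$$ and $\varepsilon_{1,Z},\dots,\varepsilon_{M,Z}$ are independent Gaussian random vectors with zero mean and covariance matrix $\mathbb E(\varepsilon_{n,Z}\varepsilon_{n,Z}^\top)=[c_{ij;n}]_{N\times N}$, where $$c_{ij;n}:=\beta_{ij}\int_{(n-1)T/M}^{nT/M}\Big(\frac{T_i}{T_i-s}\Big)^{\kappa_i}\Big(\frac{T_j}{T_j-s}\Big)^{\kappa_j}ds,$$ and $\beta_{ij}$ is the $(i,j)$ entry of $\Sigma_Z:=\tilde\Sigma_Z\tilde\Sigma_Z^\top=\Sigma_F+\Sigma_S-\Sigma_{FS}-\Sigma_{FS}^\top$.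
   Context: Market model: $N\ge1$ is an integer, $r\ge0$ a constant interest rate, $T>0$ the trading horizon, and $T_1,\dots,T_N$ futures maturities with $T<T_i$ for all $i$. On a filtered probability space with Brownian filtration satisfying the usual conditions, $W_t=(W_{t,1},\dots,W_{t,2N})^\top$ is a standard $2N$-dimensional Brownian motion. Let $\tilde\Sigma=[\tilde\sigma_{ij}]$ be a real $2N\times2N$ lower triangular matrix ($\tilde\sigma_{ij}=0$ for $j>i$) and $\Sigma:=\tilde\Sigma\tilde\Sigma^\top=\begin{pmatrix}\Sigma_F&\Sigma_{FS}\\ \Sigma_{FS}^\top&\Sigma_S\end{pmatrix}$ ($N\times N$ blocks), assumed positive definite; $\sigma_{i,F}:=\sqrt{\Sigma_{ii}}$, $\sigma_{i,S}:=\sqrt{\Sigma_{N+i,N+i}}$. Constants $\mu_{i,F},\mu_{i,S},\eta_{i,F},\eta_{i,S}$ satisfy $\eta_{i,F}<\eta_{i,S}$. Futures prices $F_{t,i}$ and spot prices $S_{t,i}$ satisfy $dF_{t,i}=F_{t,i}\big[(\mu_{i,F}+\tfrac{\eta_{i,F}}{T_i-t}Z_{t,i})dt+\sum_{j=1}^{i}\tilde\sigma_{i,j}dW_{t,j}\big]$, $dS_{t,i}=S_{t,i}\big[(\mu_{i,S}+\tfrac{\eta_{i,S}}{T_i-t}Z_{t,i})dt+\sum_{j=1}^{N+i}\tilde\sigma_{N+i,j}dW_{t,j}\big]$, where $Z_{t,i}:=\log(F_{t,i}/S_{t,i})-r(T_i-t)$ and $Z_t=(Z_{t,1},\dots,Z_{t,N})^\top$,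 $0\le t\le T$. Equivalently $Z$ is the unique solution of $dZ_t=(m-K(t)Z_t)dt+\tilde\Sigma_ZdW_t$, where $\tilde\Sigma_Z:=[I_N,-I_N]\tilde\Sigma$, $m=(m_i)$ with $m_i=r+\mu_{i,F}-\mu_{i,S}-\frac12(\sigma_{i,F}^2-\sigma_{i,S}^2)$, $\kappa_i:=\eta_{i,S}-\eta_{i,F}>0$, $K(t)=\operatorname{diag}(\kappa_i/(T_i-t))$. For a vector $(a_1,\dots,a_N)$, $\operatorname{diag}(a_i)$ denotes the diagonal matrix with these entries. *)

theory Defs
  imports "HOL-Probability.Probability"
begin

(* Vectors in R^d are represented as functions nat => real, with coordinates 1..d. *)

text \<open>Gaussian random vector (coordinates in I) with mean mu and covariance C,
  characterised by its characteristic function (this covers degenerate cases).\<close>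
definition gaussian_vec ::
  "'a measure \<Rightarrow> nat set \<Rightarrow> ('a \<Rightarrow> nat \<Rightarrow> real) \<Rightarrow> (nat \<Rightarrow> real) \<Rightarrow> (nat \<Rightarrow> nat \<Rightarrow> real) \<Rightarrow> bool"
  where "gaussian_vec P I X mu C \<longleftrightarrow>
    (\<forall>i\<in>I. (\<lambda>\<omega>. X \<omega> i) \<in> borel_measurable P) \<and>
    (\<forall>u::nat \<Rightarrow> real.
       (\<integral>\<omega>. cis (\<Sum>i\<in>I. u i * X \<omega> i) \<partial>P)
         = cis (\<Sum>i\<in>I. u i * mu i)
           * complex_of_real (exp (- (\<Sum>i\<in>I. \<Sum>j\<in>I. u i * C i j * u j) / 2)))"

definition std_brownian :: "'a measure \<Rightarrow> nat \<Rightarrow> (real \<Rightarrow> 'a \<Rightarrow> nat \<Rightarrow> real) \<Rightarrow> bool"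
  where "std_brownian P d W \<longleftrightarrow>
    (\<forall>t\<ge>0. \<forall>j\<in>{1..d}. (\<lambda>\<omega>. W t \<omega> j) \<in> borel_measurable P) \<and>
    (\<forall>\<omega>\<in>space P. \<forall>j\<in>{1..d}. W 0 \<omega> j = 0 \<and> continuous_on {0..} (\<lambda>t. W t \<omega> j)) \<and>
    (\<forall>ts::real list. sorted ts \<and> (\<forall>t\<in>set ts. 0 \<le> t) \<longrightarrow>
       prob_space.indep_vars P (\<lambda>_. PiM {1..d} (\<lambda>_. borel))
         (\<lambda>l \<omega>. restrict (\<lambda>j. W (ts ! Suc l) \<omega> j - W (ts ! l) \<omega> j) {1..d})
         {..<length ts - 1}) \<and>
    (\<forall>s t. 0 \<le> s \<and> s \<le> t \<longrightarrow>
       gaussian_vec P {1..d} (\<lambda>\<omega> j. W t \<omega> j - W s \<omega> j) (\<lambda>_. 0)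
         (\<lambda>i j. if i = j then t - s else 0))"

text \<open>Sigma = St St^T (2N x 2N), St the lower triangular matrix tilde Sigma.\<close>
definition Sigma :: "nat \<Rightarrow> (nat \<Rightarrow> nat \<Rightarrow> real) \<Rightarrow> nat \<Rightarrow> nat \<Rightarrow> real"
  where "Sigma N St i j = (\<Sum>k=1..2*N. St i k * St j k)"

text \<open>tilde Sigma_Z = [I_N, -I_N] tilde Sigma  (N x 2N).\<close>
definition SigmaZt :: "nat \<Rightarrow> (nat \<Rightarrow> nat \<Rightarrow> real) \<Rightarrow> nat \<Rightarrow> nat \<Rightarrow> real"
  where "SigmaZt N St i j = St i j - St (N + i) j"

definition betaZ :: "nat \<Rightarrow> (nat \<Rightarrow> nat \<Rightarrow> real) \<Rightarrow> nat \<Rightarrow> nat \<Rightarrow> real"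
  where "betaZ N St i j = (\<Sum>k=1..2*N. SigmaZt N St i k * SigmaZt N St j k)"

definition drift_m :: "nat \<Rightarrow> real \<Rightarrow> (nat \<Rightarrow> nat \<Rightarrow> real) \<Rightarrow> (nat \<Rightarrow> real) \<Rightarrow> (nat \<Rightarrow> real) \<Rightarrow> nat \<Rightarrow> real"
  where "drift_m N r St muF muS i =
     r + muF i - muS i - ((sqrt (Sigma N St i i))\<^sup>2 - (sqrt (Sigma N St (N + i) (N + i)))\<^sup>2) / 2"

definition kappa :: "(nat \<Rightarrow> real) \<Rightarrow> (nat \<Rightarrow> real) \<Rightarrow> nat \<Rightarrow> real"
  where "kappa etaF etaS i = etaS i - etaF i"

definition phi :: "real \<Rightarrow> nat \<Rightarrow> (nat \<Rightarrow> real) \<Rightarrow> (nat \<Rightarrow> real) \<Rightarrow> nat \<Rightarrow> nat \<Rightarrow> real"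
  where "phi T M Tm k n i =
    (if k i = 1
     then Tm i * ln ((Tm i - (real n - 1) * T / real M) / (Tm i - real n * T / real M))
     else Tm i powr k i / (k i - 1) *
            ((Tm i - real n * T / real M) powr (1 - k i)
             - (Tm i - (real n - 1) * T / real M) powr (1 - k i)))"

definition covc :: "real \<Rightarrow> nat \<Rightarrow> (nat \<Rightarrow> real) \<Rightarrow> (nat \<Rightarrow> real) \<Rightarrow> (nat \<Rightarrow> nat \<Rightarrow> real)
                    \<Rightarrow> nat \<Rightarrow> nat \<Rightarrow> nat \<Rightarrow> real"
  where "covc T M Tm k \<beta> n i j =
    \<beta> i j * integral {(real n - 1) * T / real M .. real n * T / real M}
       (\<lambda>s. (Tm i / (Tm i - s)) powr k i * (Tm j / (Tm j - s)) powr k j)"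

definition epsZ :: "real \<Rightarrow> nat \<Rightarrow> (nat \<Rightarrow> real) \<Rightarrow> (nat \<Rightarrow> real) \<Rightarrow> (nat \<Rightarrow> real)
                    \<Rightarrow> (real \<Rightarrow> 'a \<Rightarrow> nat \<Rightarrow> real) \<Rightarrow> nat \<Rightarrow> 'a \<Rightarrow> nat \<Rightarrow> real"
  where "epsZ T M Tm k m Z n \<omega> i =
    (Tm i / (Tm i - real n * T / real M)) powr k i * Z (real n * T / real M) \<omega> i
    - (Tm i / (Tm i - (real n - 1) * T / real M)) powr k i * Z ((real n - 1) * T / real M) \<omega> i
    - phi T M Tm k n i * m i"

end

theory Submission
  imports Defs
begin



lemma integral_split_grid:
  fixes H :: "real \<Rightarrow> real"
  assumes "h \<ge> 0" "continuous_on {a..a + real m * h} H"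
  shows "integral {a..a + real m * h} H = (\<Sum>l<m. integral {a + real l * h..a + real (Suc l) * h} H)"
  using assms(2)
proof (induction m)
  case 0
  then show ?case by simp
next
  case (Suc m)
  have mm: "real m * h \<le> real (Suc m) * h" using assms(1) by (intro mult_right_mono) auto
  have sub: "{a..a + real m * h} \<subseteq> {a..a + real (Suc m) * h}"
    using assms(1) by (auto simp: algebra_simps intro: order_trans[of _ "a + real m * h"] mm)
  have sub2: "{a + real m * h..a + real (Suc m) * h} \<subseteq> {a..a + real (Suc m) * h}"
    using assms(1) by (auto simp: algebra_simps intro: order_trans[of _ "a + real m * h"] mm)
  have IH: "integral {a..a + real m * h} H = (\<Sum>l<m. integral {a + real l * h..a + real (Suc l) * h} H)"
    using Suc.IH Suc.prems continuous_on_subset[OF _ sub] by blast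
  have "integral {a..a + real m * h} H + integral {a + real m * h..a + real (Suc m) * h} H
        = integral {a..a + real (Suc m) * h} H"
    by (rule Henstock_Kurzweil_Integration.integral_combine)
       (use assms(1) Suc.prems mm in \<open>auto intro: integrable_continuous_real\<close>)
  then show ?case using IH by simp
qed

lemma riemann_err:
  fixes F G :: "real \<Rightarrow> real" and a b :: real and \<theta> :: nat
  assumes ab: "a < b" and F: "continuous_on {a..b} F" and G: "continuous_on {a..b} G"
    and th: "\<theta> \<le> 1"
  shows "(\<lambda>k. \<Sum>l<(2::nat)^k. integral {a + real l * ((b-a)/2^k)..a + real (Suc l) * ((b-a)/2^k)}
            (\<lambda>s. G s * (F s - F (a + real (l + \<theta>) * ((b-a)/2^k))))) \<longlonglongrightarrow> 0"
proof (rule LIMSEQ_I)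
  fix e :: real assume e: "e > 0"
  obtain B where B: "B > 0" "\<And>s. s \<in> {a..b} \<Longrightarrow> norm (G s) \<le> B"
    using compact_continuous_image[OF G compact_Icc] by (metis compact_imp_bounded bounded_pos imageI)
  define e' where "e' = e / (2 * B * (b - a))"
  have e': "e' > 0" using e B ab by (simp add: e'_def)
  have uc: "uniformly_continuous_on {a..b} F"
    using F compact_uniformly_continuous by blast
  then obtain d where d: "d > 0" "\<And>x x'. x \<in> {a..b} \<Longrightarrow> x' \<in> {a..b} \<Longrightarrow> dist x' x < d \<Longrightarrow> dist (F x') (F x) < e'"
    unfolding uniformly_continuous_on_def using e' by metis
  obtain k0 where k0: "(b - a) / 2 ^ k0 < d"
  proof -
    have "(\<lambda>k. (b - a) / 2 ^ k) \<longlonglongrightarrow> 0"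
      by (intro LIMSEQ_divide_realpow_zero) auto
    then have "\<exists>k0. \<forall>k\<ge>k0. norm ((b - a) / 2 ^ k - 0) < d" using d(1) LIMSEQ_D by blast
    then show ?thesis using that ab by (auto simp: abs_of_pos)
  qed
  show "\<exists>no. \<forall>k\<ge>no. norm ((\<Sum>l<(2::nat)^k. integral {a + real l * ((b-a)/2^k)..a + real (Suc l) * ((b-a)/2^k)}
            (\<lambda>s. G s * (F s - F (a + real (l + \<theta>) * ((b-a)/2^k))))) - 0) < e"
  proof (intro exI allI impI)
    fix k assume k: "k \<ge> k0"
    define h where "h = (b - a) / 2 ^ k"
    have "(b - a) / 2 ^ k \<le> (b - a) / 2 ^ k0"
      using ab k by (intro divide_left_mono) (auto simp: power_increasing)
    then have h: "h > 0" "h < d" using ab k0 unfolding h_def by auto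
    have Kh: "real (2^k) * h = b - a" unfolding h_def by simp
    have piece: "norm (integral {a + real l * h..a + real (Suc l) * h}
            (\<lambda>s. G s * (F s - F (a + real (l + \<theta>) * h)))) \<le> B * e' * h" if l: "l < 2^k" for l
    proof -
      have lb: "real (Suc l) \<le> real (2^k)" using l by linarith
      have sub: "{a + real l * h..a + real (Suc l) * h} \<subseteq> {a..b}"
      proof -
        have "real (Suc l) * h \<le> real (2^k) * h" using lb h by (intro mult_right_mono) auto
        then show ?thesis using h Kh by (auto simp: algebra_simps intro: order_trans[of _ "a + real l * h"])
      qed
      have cpt: "a + real (l + \<theta>) * h \<in> {a..b}"
      proof -
        have "real (l + \<theta>) \<le> real (2^k)" using l th by linarith
        then have "real (l + \<theta>) * h \<le> real (2^k) * h" using h by (intro mult_right_mono) auto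
        then show ?thesis using h Kh by (simp only: atLeastAtMost_iff) (auto simp del: of_nat_add)
      qed
      have "norm (integral {a + real l * h..a + real (Suc l) * h}
            (\<lambda>s. G s * (F s - F (a + real (l + \<theta>) * h)))) \<le> (B * e') * (a + real (Suc l) * h - (a + real l * h))"
      proof (rule integral_bound)
        show "a + real l * h \<le> a + real (Suc l) * h" using h by (simp add: algebra_simps)
        show "continuous_on {a + real l * h..a + real (Suc l) * h} (\<lambda>s. G s * (F s - F (a + real (l + \<theta>) * h)))"
          using sub by (intro continuous_intros continuous_on_subset[OF G] continuous_on_subset[OF F]) auto
      next
        fix t assume t: "t \<in> {a + real l * h..a + real (Suc l) * h}"
        then have tab: "t \<in> {a..b}" using sub by auto
        have "dist t (a + real (l + \<theta>) * h) < d"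
        proof -
          have "\<bar>t - (a + real (l + \<theta>) * h)\<bar> \<le> h"
            using t th h by (cases \<theta>) (auto simp: algebra_simps abs_if)
          then show ?thesis using h by (simp add: dist_real_def)
        qed
        then have "dist (F t) (F (a + real (l + \<theta>) * h)) < e'"
          using d(2)[OF cpt tab] by (simp add: dist_commute)
        then have "\<bar>F t - F (a + real (l + \<theta>) * h)\<bar> \<le> e'" by (simp add: dist_real_def)
        moreover have "\<bar>G t\<bar> \<le> B" using B(2)[OF tab] by simp
        ultimately show "norm (G t * (F t - F (a + real (l + \<theta>) * h))) \<le> B * e'"
          by (simp add: abs_mult mult_mono')
      qed
      then show ?thesis by (simp add: algebra_simps)
    qed
    have "norm (\<Sum>l<(2::nat)^k. integral {a + real l * h..a + real (Suc l) * h}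
            (\<lambda>s. G s * (F s - F (a + real (l + \<theta>) * h)))) \<le> (\<Sum>l<(2::nat)^k. B * e' * h)"
      by (rule order_trans[OF norm_sum sum_mono]) (use piece in auto)
    also have "\<dots> = B * e' * (real (2^k) * h)" by simp
    also have "\<dots> = B * e' * (b - a)" using Kh by simp
    also have "\<dots> < e" using B ab e unfolding e'_def by (simp add: field_simps)
    finally show "norm ((\<Sum>l<(2::nat)^k. integral {a + real l * ((b-a)/2^k)..a + real (Suc l) * ((b-a)/2^k)}
            (\<lambda>s. G s * (F s - F (a + real (l + \<theta>) * ((b-a)/2^k))))) - 0) < e"
      unfolding h_def by simp
  qed
qed




lemma grid_sub:
  fixes a b :: real
  assumes "a < b" "l < (2::nat)^k"
  shows "{a + real l * ((b-a)/2^k)..a + real (Suc l) * ((b-a)/2^k)} \<subseteq> {a..b}"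
proof -
  have "real (Suc l) \<le> 2^k" using assms(2)
    by (metis Suc_leI of_nat_le_iff of_nat_numeral of_nat_power)
  then have "real (Suc l) * ((b-a)/2^k) \<le> 2^k * ((b-a)/2^k)"
    using assms(1) by (intro mult_right_mono) auto
  moreover have "0 \<le> real l * ((b-a)/2^k)" using assms(1) by auto
  ultimately show ?thesis by auto
qed

lemma grid_step:
  fixes a b :: real
  shows "a + real (Suc l) * ((b-a)/2^k) = (a + real l * ((b-a)/2^k)) + (b-a)/2^k"
  by (simp add: distrib_right add_divide_distrib)

lemma grid_le:
  fixes a b :: real
  assumes "a < b"
  shows "a + real l * ((b-a)/2^k) \<le> a + real (Suc l) * ((b-a)/2^k)"
  unfolding grid_step using assms by simp

lemma grid_end: "a + real ((2::nat)^k) * ((b-a)/2^k) = (b::real)"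
  by simp

lemma riemann_sum:
  fixes F :: "real \<Rightarrow> real"
  assumes ab: "a < b" and F: "continuous_on {a..b} F"
  shows "(\<lambda>k. \<Sum>l<(2::nat)^k. ((b-a)/2^k) * F (a + real l * ((b-a)/2^k))) \<longlonglongrightarrow> integral {a..b} F"
proof -
  let ?h = "\<lambda>k::nat. (b-a)/2^k"
  let ?I = "\<lambda>k l. {a + real l * ?h k..a + real (Suc l) * ?h k}"
  have eq: "(\<Sum>l<(2::nat)^k. ?h k * F (a + real l * ?h k)) =
     integral {a..b} F - (\<Sum>l<(2::nat)^k. integral (?I k l) (\<lambda>s. 1 * (F s - F (a + real (l + 0) * ?h k))))" for k
  proof -
    have split: "integral {a..b} F = (\<Sum>l<(2::nat)^k. integral (?I k l) F)"
      using integral_split_grid[of "?h k" a "2^k" F] ab F by (simp add: grid_end)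
    have "integral (?I k l) (\<lambda>s. 1 * (F s - F (a + real (l + 0) * ?h k)))
        = integral (?I k l) F - ?h k * F (a + real l * ?h k)" if l: "l < 2^k" for l
    proof -
      have c: "continuous_on (?I k l) F" using continuous_on_subset[OF F grid_sub[OF ab l]] .
      have "integral (?I k l) (\<lambda>s. F s - F (a + real l * ?h k)) = integral (?I k l) F - integral (?I k l) (\<lambda>s. F (a + real l * ?h k))"
        by (rule integral_diff) (use c in \<open>auto intro: integrable_continuous_real\<close>)
      moreover have "integral (?I k l) (\<lambda>s. F (a + real l * ?h k)) = ?h k * F (a + real l * ?h k)"
        unfolding integral_const_real using grid_le[OF ab, of l k] by (simp only: content_real grid_step) simp
      ultimately show ?thesis by simp
    qed
    then have "(\<Sum>l<(2::nat)^k. integral (?I k l) (\<lambda>s. 1 * (F s - F (a + real (l + 0) * ?h k))))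
      = (\<Sum>l<(2::nat)^k. integral (?I k l) F) - (\<Sum>l<(2::nat)^k. ?h k * F (a + real l * ?h k))"
      by (simp add: sum_subtractf)
    then show ?thesis using split by simp
  qed
  have "(\<lambda>k. integral {a..b} F - (\<Sum>l<(2::nat)^k. integral (?I k l) (\<lambda>s. 1 * (F s - F (a + real (l + 0) * ?h k))))) \<longlonglongrightarrow> integral {a..b} F - 0"
    by (intro tendsto_diff tendsto_const riemann_err ab F) auto
  then show ?thesis unfolding eq by simp
qed

lemma stieltjes_sum:
  fixes g g' Y :: "real \<Rightarrow> real"
  assumes ab: "a < b" and Y: "continuous_on {a..b} Y" and g': "continuous_on {a..b} g'"
    and dg: "\<And>x. x \<in> {a..b} \<Longrightarrow> (g has_real_derivative g' x) (at x)"
  shows "(\<lambda>k. \<Sum>l<(2::nat)^k. g (a + real l * ((b-a)/2^k)) *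
              (Y (a + real (Suc l) * ((b-a)/2^k)) - Y (a + real l * ((b-a)/2^k))))
          \<longlonglongrightarrow> g b * Y b - g a * Y a - integral {a..b} (\<lambda>s. g' s * Y s)"
proof -
  let ?h = "\<lambda>k::nat. (b-a)/2^k"
  let ?x = "\<lambda>k l. a + real l * ?h k"
  let ?I = "\<lambda>k l. {?x k l..?x k (Suc l)}"
  have eq: "(\<Sum>l<(2::nat)^k. g (?x k l) * (Y (?x k (Suc l)) - Y (?x k l))) =
     g b * Y b - g a * Y a - integral {a..b} (\<lambda>s. g' s * Y s)
     + (\<Sum>l<(2::nat)^k. integral (?I k l) (\<lambda>s. g' s * (Y s - Y (a + real (l + 1) * ?h k))))" for k
  proof -
    have split: "integral {a..b} (\<lambda>s. g' s * Y s) = (\<Sum>l<(2::nat)^k. integral (?I k l) (\<lambda>s. g' s * Y s))"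
      using integral_split_grid[of "?h k" a "2^k" "\<lambda>s. g' s * Y s"] ab
      by (simp add: grid_end continuous_intros Y g')
    have piece: "integral (?I k l) (\<lambda>s. g' s * (Y s - Y (a + real (l + 1) * ?h k)))
        = integral (?I k l) (\<lambda>s. g' s * Y s) - (g (?x k (Suc l)) - g (?x k l)) * Y (?x k (Suc l))"
      if l: "l < 2^k" for l
    proof -
      have sub: "?I k l \<subseteq> {a..b}" using grid_sub[OF ab l] .
      have c: "continuous_on (?I k l) g'" "continuous_on (?I k l) Y"
        using continuous_on_subset[OF g' sub] continuous_on_subset[OF Y sub] by auto
      have le: "?x k l \<le> ?x k (Suc l)" using grid_le[OF ab] .
      have ftc: "(g' has_integral (g (?x k (Suc l)) - g (?x k l))) (?I k l)"
        apply (rule fundamental_theorem_of_calculus[OF le])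
        using dg sub by (auto simp: has_real_derivative_iff_has_vector_derivative[symmetric]
             intro: has_field_derivative_at_within)
      have "integral (?I k l) (\<lambda>s. g' s * Y s - g' s * Y (?x k (Suc l)))
          = integral (?I k l) (\<lambda>s. g' s * Y s) - integral (?I k l) (\<lambda>s. g' s * Y (?x k (Suc l)))"
        by (rule integral_diff) (use c in \<open>auto intro!: integrable_continuous_real continuous_intros\<close>)
      moreover have "integral (?I k l) (\<lambda>s. g' s * Y (?x k (Suc l))) = (g (?x k (Suc l)) - g (?x k l)) * Y (?x k (Suc l))"
        using integral_unique[OF has_integral_mult_left[OF ftc]] by simp
      ultimately show ?thesis by (simp add: algebra_simps)
    qed
    have tel: "(\<Sum>l<(2::nat)^k. g (?x k (Suc l)) * Y (?x k (Suc l)) - g (?x k l) * Y (?x k l))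
          = g b * Y b - g a * Y a"
      using sum_lessThan_telescope[of "\<lambda>l. g (?x k l) * Y (?x k l)" "2^k"] by (simp add: grid_end)
    have "(\<Sum>l<(2::nat)^k. integral (?I k l) (\<lambda>s. g' s * (Y s - Y (a + real (l + 1) * ?h k))))
       = integral {a..b} (\<lambda>s. g' s * Y s) - (\<Sum>l<(2::nat)^k. (g (?x k (Suc l)) - g (?x k l)) * Y (?x k (Suc l)))"
      using piece by (simp add: sum_subtractf split)
    moreover have "(\<Sum>l<(2::nat)^k. g (?x k l) * (Y (?x k (Suc l)) - Y (?x k l)))
       = (\<Sum>l<(2::nat)^k. g (?x k (Suc l)) * Y (?x k (Suc l)) - g (?x k l) * Y (?x k l))
         - (\<Sum>l<(2::nat)^k. (g (?x k (Suc l)) - g (?x k l)) * Y (?x k (Suc l)))"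
      by (simp add: sum_subtractf[symmetric] algebra_simps)
    ultimately show ?thesis using tel by simp
  qed
  have "(\<lambda>k. g b * Y b - g a * Y a - integral {a..b} (\<lambda>s. g' s * Y s)
     + (\<Sum>l<(2::nat)^k. integral (?I k l) (\<lambda>s. g' s * (Y s - Y (a + real (l + 1) * ?h k)))))
     \<longlonglongrightarrow> g b * Y b - g a * Y a - integral {a..b} (\<lambda>s. g' s * Y s) + 0"
    by (intro tendsto_add tendsto_const riemann_err ab Y g') auto
  then show ?thesis unfolding eq by simp
qed




definition gk :: "real \<Rightarrow> real \<Rightarrow> real \<Rightarrow> real" where
  "gk Tm \<kappa> t = (Tm / (Tm - t)) powr \<kappa>"

definition gk' :: "real \<Rightarrow> real \<Rightarrow> real \<Rightarrow> real" where
  "gk' Tm \<kappa> t = \<kappa> / (Tm - t) * gk Tm \<kappa> t"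

definition Phi :: "real \<Rightarrow> real \<Rightarrow> real \<Rightarrow> real \<Rightarrow> real" where
  "Phi Tm \<kappa> a b = (if \<kappa> = 1 then Tm * ln ((Tm - a) / (Tm - b))
     else Tm powr \<kappa> / (\<kappa> - 1) * ((Tm - b) powr (1 - \<kappa>) - (Tm - a) powr (1 - \<kappa>)))"

lemma gk_deriv:
  assumes "t < Tm" "0 < Tm"
  shows "(gk Tm \<kappa> has_real_derivative gk' Tm \<kappa> t) (at t)"
proof -
  have "((\<lambda>t. (Tm / (Tm - t)) powr \<kappa>) has_real_derivative
     (Tm / (Tm - t)) powr \<kappa> * (0 * ln (Tm / (Tm - t)) + (Tm / (Tm - t)^2) * \<kappa> / (Tm / (Tm - t)))) (at t)"
    using assms by (intro DERIV_powr) (auto intro!: derivative_eq_intros simp: power2_eq_square field_simps)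
  moreover have "(Tm / (Tm - t)) powr \<kappa> * (0 * ln (Tm / (Tm - t)) + (Tm / (Tm - t)^2) * \<kappa> / (Tm / (Tm - t)))
      = gk' Tm \<kappa> t"
  proof -
    have gen: "\<And>d::real. d \<noteq> 0 \<Longrightarrow> (Tm / d^2) * \<kappa> / (Tm / d) = \<kappa> / d"
      using assms by (simp add: power2_eq_square field_simps)
    have "(Tm / (Tm - t)^2) * \<kappa> / (Tm / (Tm - t)) = \<kappa> / (Tm - t)"
      using assms by (intro gen) auto
    then show ?thesis by (simp add: gk'_def gk_def)
  qed
  ultimately show ?thesis unfolding gk_def by simp
qed

lemma gk_cont: "b < Tm \<Longrightarrow> 0 < Tm \<Longrightarrow> continuous_on {a..b} (gk Tm \<kappa>)"
  by (intro DERIV_continuous_on[of _ _ "gk' Tm \<kappa>"] gk_deriv has_field_derivative_at_within) auto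

lemma gk'_cont: "b < Tm \<Longrightarrow> 0 < Tm \<Longrightarrow> continuous_on {a..b} (gk' Tm \<kappa>)"
  unfolding gk'_def by (intro continuous_intros gk_cont) auto

lemma gk_integral:
  assumes "a \<le> b" "b < Tm" "0 < Tm"
  shows "(gk Tm \<kappa> has_integral Phi Tm \<kappa> a b) {a..b}"
proof (cases "\<kappa> = 1")
  case True
  let ?A = "\<lambda>t. - Tm * ln (Tm - t)"
  have "(gk Tm \<kappa> has_integral ?A b - ?A a) {a..b}"
  proof (rule fundamental_theorem_of_calculus[OF assms(1)])
    fix x assume x: "x \<in> {a..b}"
    have "(?A has_real_derivative gk Tm \<kappa> x) (at x)"
      using x assms True by (auto intro!: derivative_eq_intros simp: gk_def field_simps)
    then show "(?A has_vector_derivative gk Tm \<kappa> x) (at x within {a..b})"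
      by (simp add: has_real_derivative_iff_has_vector_derivative[symmetric] has_field_derivative_at_within)
  qed
  moreover have "?A b - ?A a = Phi Tm \<kappa> a b"
    using True assms by (simp add: Phi_def ln_div algebra_simps)
  ultimately show ?thesis by simp
next
  case False
  let ?A = "\<lambda>t. Tm powr \<kappa> / (\<kappa> - 1) * (Tm - t) powr (1 - \<kappa>)"
  have "(gk Tm \<kappa> has_integral ?A b - ?A a) {a..b}"
  proof (rule fundamental_theorem_of_calculus[OF assms(1)])
    fix x assume x: "x \<in> {a..b}"
    have pos: "Tm - x > 0" using x assms by auto
    have "(?A has_real_derivative Tm powr \<kappa> / (\<kappa> - 1) * ((Tm - x) powr (1 - \<kappa>) * (0 * ln (Tm - x) + (-1) * (1 - \<kappa>) / (Tm - x)))) (at x)"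
      using pos by (intro DERIV_cmult DERIV_powr) (auto intro!: derivative_eq_intros)
    moreover have "Tm powr \<kappa> / (\<kappa> - 1) * ((Tm - x) powr (1 - \<kappa>) * (0 * ln (Tm - x) + (-1) * (1 - \<kappa>) / (Tm - x)))
       = gk Tm \<kappa> x"
    proof -
      have "(Tm - x) powr (1 - \<kappa>) / (Tm - x) = (Tm - x) powr (- \<kappa>)"
        using pos by (simp add: powr_diff powr_minus divide_inverse)
      moreover have "gk Tm \<kappa> x = Tm powr \<kappa> * (Tm - x) powr (- \<kappa>)"
      proof -
        have "gk Tm \<kappa> x = Tm powr \<kappa> / (Tm - x) powr \<kappa>"
          using pos assms unfolding gk_def by (simp add: powr_divide)
        then show ?thesis by (simp add: powr_minus divide_inverse)
      qed
      moreover have gen: "\<And>d C P L::real. d \<noteq> 0 \<Longrightarrow> C / (\<kappa> - 1) * (P * (0 * L + (-1) * (1 - \<kappa>) / d)) = C * (P / d)"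
        using False by (simp add: field_simps)
      ultimately show ?thesis using gen[of "Tm - x" "Tm powr \<kappa>" "(Tm - x) powr (1 - \<kappa>)" "ln (Tm - x)"] pos
        by simp
    qed
    ultimately have "(?A has_real_derivative gk Tm \<kappa> x) (at x)" by simp
    then show "(?A has_vector_derivative gk Tm \<kappa> x) (at x within {a..b})"
      by (simp add: has_real_derivative_iff_has_vector_derivative[symmetric] has_field_derivative_at_within)
  qed
  moreover have "?A b - ?A a = Phi Tm \<kappa> a b"
    using False by (simp add: Phi_def algebra_simps)
  ultimately show ?thesis by simp
qed




lemma path_identity:
  fixes Zp Yp :: "real \<Rightarrow> real" and m \<kappa> Tm T a b :: real
  assumes ab: "0 \<le> a" "a \<le> b" "b \<le> T" "T < Tm" "0 < Tm"
    and Zc: "continuous_on {0..T} Zp" and Yc: "continuous_on {0..T} Yp"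
    and eq: "\<forall>t\<in>{0..T}. Zp t = Zp 0 + integral {0..t} (\<lambda>s. m - \<kappa> / (Tm - s) * Zp s) + Yp t"
  shows "gk Tm \<kappa> b * Zp b - gk Tm \<kappa> a * Zp a - Phi Tm \<kappa> a b * m
       = gk Tm \<kappa> b * Yp b - gk Tm \<kappa> a * Yp a - integral {a..b} (\<lambda>s. gk' Tm \<kappa> s * Yp s)"
proof -
  define Fz where "Fz s = m - \<kappa> / (Tm - s) * Zp s" for s
  define U where "U t = Zp 0 + integral {0..t} Fz" for t
  define g where "g = gk Tm \<kappa>"
  define g' where "g' = gk' Tm \<kappa>"
  have sub: "{a..b} \<subseteq> {0..T}" using ab by auto
  have Fzc: "continuous_on {0..T} Fz"
    unfolding Fz_def using ab by (intro continuous_intros Zc) auto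
  have U: "U t = Zp t - Yp t" if "t \<in> {0..T}" for t
  proof -
    have "Zp t = Zp 0 + integral {0..t} Fz + Yp t" using bspec[OF eq that] unfolding Fz_def .
    then show ?thesis unfolding U_def by linarith
  qed
  have dV: "((\<lambda>t. g t * U t) has_vector_derivative (g x * m - g' x * Yp x)) (at x within {a..b})"
    if x: "x \<in> {a..b}" for x
  proof -
    have "(U has_vector_derivative Fz x) (at x within {0..T})"
    proof -
      have "((\<lambda>t. integral {0..t} Fz) has_vector_derivative Fz x) (at x within {0..T})"
        using x sub by (intro integral_has_vector_derivative Fzc) auto
      then have "((\<lambda>t. Zp 0 + integral {0..t} Fz) has_vector_derivative 0 + Fz x) (at x within {0..T})"
        by (intro has_vector_derivative_add has_vector_derivative_const)
      then show ?thesis unfolding U_def by simp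
    qed
    then have dU: "(U has_real_derivative Fz x) (at x within {a..b})"
      unfolding has_real_derivative_iff_has_vector_derivative
      by (rule has_vector_derivative_within_subset[OF _ sub])
    have dg: "(g has_real_derivative g' x) (at x within {a..b})"
      unfolding g_def g'_def using x ab by (intro has_field_derivative_at_within[OF gk_deriv]) auto
    have "((\<lambda>t. g t * U t) has_real_derivative g t0 * Fz x + g' x * U x) (at x within {a..b})" if "t0 = x" for t0
      using DERIV_mult[OF dg dU] that by (simp add: algebra_simps)
    moreover have "g x * Fz x + g' x * U x = g x * m - g' x * Yp x"
    proof -
      have "Zp x = U x + Yp x" using U[of x] x sub by auto
      moreover have "\<And>c G. G * (m - c * (U x + Yp x)) + c * G * U x = G * m - c * G * Yp x"
        by (simp add: algebra_simps)
      ultimately show ?thesis unfolding Fz_def g'_def gk'_def g_def by (simp only:)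
    qed
    ultimately show ?thesis by (simp add: has_real_derivative_iff_has_vector_derivative)
  qed
  have I1: "((\<lambda>x. g x * m - g' x * Yp x) has_integral (g b * U b - g a * U a)) {a..b}"
    by (rule fundamental_theorem_of_calculus[OF ab(2) dV])
  have I2: "((\<lambda>x. g x * m) has_integral Phi Tm \<kappa> a b * m) {a..b}"
    unfolding g_def using gk_integral[of a b Tm \<kappa>] ab by (intro has_integral_mult_left) auto
  have I3: "((\<lambda>x. g' x * Yp x) has_integral Phi Tm \<kappa> a b * m - (g b * U b - g a * U a)) {a..b}"
    using has_integral_diff[OF I2 I1] by simp
  have "integral {a..b} (\<lambda>s. g' s * Yp s) = Phi Tm \<kappa> a b * m - (g b * U b - g a * U a)"
    using integral_unique[OF I3] .
  moreover have "U b = Zp b - Yp b" "U a = Zp a - Yp a" using U ab by auto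
  ultimately show ?thesis unfolding g_def g'_def by (simp add: algebra_simps)
qed




lemma cis_sum: "cis (\<Sum>x\<in>A. f x) = (\<Prod>x\<in>A. cis (f x))"
proof (cases "finite A")
  case True then show ?thesis by (induction A rule: finite_induct) (auto simp: cis_mult[symmetric])
qed simp

lemma cis_lin_meas: "finite J \<Longrightarrow> (\<lambda>x. cis (\<Sum>j\<in>J. v j * x j)) \<in> borel_measurable (PiM J (\<lambda>_. borel))"
proof -
  assume J: "finite J"
  have "(\<lambda>x. \<Sum>j\<in>J. v j * x j) \<in> borel_measurable (PiM J (\<lambda>_. borel))"
    by (intro borel_measurable_sum borel_measurable_times measurable_const measurable_component_singleton) auto
  moreover have "cis \<in> borel_measurable borel"
    by (intro borel_measurable_continuous_onI continuous_on_cis continuous_on_id)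
  ultimately show ?thesis by (rule measurable_compose[where f="\<lambda>x. \<Sum>j\<in>J. v j * x j"])
qed

locale bm_setup = prob_space P for P :: "'a measure" +
  fixes d :: nat and W :: "real \<Rightarrow> 'a \<Rightarrow> nat \<Rightarrow> real" and T :: real and Mn :: nat
  assumes BM: "std_brownian P d W" and Tpos: "T > 0" and Mpos: "Mn \<ge> 1"
begin

definition xg :: "nat \<Rightarrow> nat \<Rightarrow> real" where "xg k p = real p * T / (real Mn * 2^k)"
definition D :: "nat \<Rightarrow> nat \<Rightarrow> 'a \<Rightarrow> nat \<Rightarrow> real" where
  "D k p \<omega> = restrict (\<lambda>j. W (xg k (Suc p)) \<omega> j - W (xg k p) \<omega> j) {1..d}"

lemma xg_nonneg: "xg k p \<ge> 0" using Tpos by (simp add: xg_def)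

lemma xg_step: "xg k (Suc p) - xg k p = T / (real Mn * 2^k)"
  unfolding xg_def by (simp add: distrib_right add_divide_distrib)

lemma xg_mono: "p \<le> q \<Longrightarrow> xg k p \<le> xg k q"
  using Tpos Mpos by (auto simp: xg_def intro!: divide_right_mono mult_right_mono)

lemma W_meas: "t \<ge> 0 \<Longrightarrow> j \<in> {1..d} \<Longrightarrow> (\<lambda>\<omega>. W t \<omega> j) \<in> borel_measurable P"
  using BM unfolding std_brownian_def by blast

lemma D_meas: "D k p \<in> measurable P (PiM {1..d} (\<lambda>_. borel::real measure))"
  unfolding D_def by (intro measurable_restrict borel_measurable_diff W_meas xg_nonneg) auto

lemma D_indep: "indep_vars (\<lambda>_. PiM {1..d} (\<lambda>_. borel::real measure)) (D k) {..<Mn*2^k}"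
proof -
  define ts where "ts = map (xg k) [0..<Mn*2^k + 1]"
  have s: "sorted ts" unfolding ts_def sorted_map
    by (auto simp: sorted_wrt_iff_nth_less xg_mono simp del: upt_Suc)
  have nn: "\<forall>t\<in>set ts. 0 \<le> t" unfolding ts_def using xg_nonneg by auto
  have "indep_vars (\<lambda>_. PiM {1..d} (\<lambda>_. borel::real measure))
         (\<lambda>l \<omega>. restrict (\<lambda>j. W (ts ! Suc l) \<omega> j - W (ts ! l) \<omega> j) {1..d})
         {..<length ts - 1}"
    using BM s nn unfolding std_brownian_def by blast
  moreover have "length ts - 1 = Mn*2^k" unfolding ts_def by simp
  moreover have "\<And>l. l < Mn*2^k \<Longrightarrow> (\<lambda>\<omega>. restrict (\<lambda>j. W (ts ! Suc l) \<omega> j - W (ts ! l) \<omega> j) {1..d}) = D k l"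
    unfolding ts_def D_def by (auto simp: nth_append simp del: upt_Suc)
  ultimately show ?thesis
    by (subst indep_vars_cong[where J="{..<Mn*2^k}" and Y="\<lambda>l \<omega>. restrict (\<lambda>j. W (ts ! Suc l) \<omega> j - W (ts ! l) \<omega> j) {1..d}" and N'="\<lambda>_. PiM {1..d} (\<lambda>_. borel::real measure)"]) auto
qed

lemma D_char:
  "(\<integral>\<omega>. cis (\<Sum>j\<in>{1..d}. v j * D k p \<omega> j) \<partial>P) =
     complex_of_real (exp (- (T / (real Mn * 2^k)) * (\<Sum>j\<in>{1..d}. (v j)^2) / 2))"
proof -
  let ?s = "xg k p" and ?t = "xg k (Suc p)"
  have "gaussian_vec P {1..d} (\<lambda>\<omega> j. W ?t \<omega> j - W ?s \<omega> j) (\<lambda>_. 0)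
         (\<lambda>i j. if i = j then ?t - ?s else 0)"
    using BM xg_nonneg xg_mono[of p "Suc p" k] unfolding std_brownian_def by auto
  then have g: "(\<integral>\<omega>. cis (\<Sum>i\<in>{1..d}. v i * (W ?t \<omega> i - W ?s \<omega> i)) \<partial>P)
     = cis (\<Sum>i\<in>{1..d}. v i * 0) * complex_of_real (exp (- (\<Sum>i\<in>{1..d}. \<Sum>j\<in>{1..d}. v i * (if i = j then ?t - ?s else 0) * v j) / 2))"
    unfolding gaussian_vec_def by blast
  have "(\<Sum>i\<in>{1..d}. \<Sum>j\<in>{1..d}. v i * (if i = j then ?t - ?s else 0) * v j) = (T / (real Mn * 2^k)) * (\<Sum>j\<in>{1..d}. (v j)^2)"
    by (simp add: xg_step sum_distrib_left power2_eq_square algebra_simps if_distrib[of "\<lambda>x. _ * x"] if_distrib[of "\<lambda>x. x * _"] cong: if_cong)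
  moreover have "(\<integral>\<omega>. cis (\<Sum>j\<in>{1..d}. v j * D k p \<omega> j) \<partial>P) = (\<integral>\<omega>. cis (\<Sum>i\<in>{1..d}. v i * (W ?t \<omega> i - W ?s \<omega> i)) \<partial>P)"
    unfolding D_def by (intro Bochner_Integration.integral_cong refl arg_cong[where f=cis] sum.cong) auto
  ultimately show ?thesis using g by simp
qed


definition blk :: "nat \<Rightarrow> nat \<Rightarrow> nat set" where "blk k n = {(n-1)*2^k ..< n*2^k}"
definition Ek :: "nat \<Rightarrow> nat \<Rightarrow> 'a set set" where
  "Ek k p = {D k p -` A \<inter> space P | A. A \<in> sets (PiM {1..d} (\<lambda>_. borel::real measure))}"
definition Gs :: "nat \<Rightarrow> nat \<Rightarrow> 'a set set" where
  "Gs k n = sigma_sets (space P) (\<Union>p\<in>blk k n. Ek k p)"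
definition Hn :: "nat \<Rightarrow> 'a set set" where "Hn n = (\<Union>k. Gs k n)"

lemma Ek_events: "Ek k p \<subseteq> events"
  unfolding Ek_def using D_meas by auto

lemma Ek_Pow: "(\<Union>p\<in>B. Ek k p) \<subseteq> Pow (space P)"
  unfolding Ek_def by auto

lemma Gs_events: "Gs k n \<subseteq> events"
  unfolding Gs_def using Ek_events by (intro sets.sigma_sets_subset) auto

lemma Gs_Pow: "Gs k n \<subseteq> Pow (space P)"
  using Gs_events sets.sets_into_space[of _ P] by blast

lemma D_meas_sigma:
  assumes G: "G \<subseteq> Pow (space P)"
    and pre: "\<And>A. A \<in> sets (PiM {1..d} (\<lambda>_. borel::real measure)) \<Longrightarrow> D k p -` A \<inter> space P \<in> sigma_sets (space P) G"
  shows "D k p \<in> measurable (sigma (space P) G) (PiM {1..d} (\<lambda>_. borel::real measure))"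
proof (rule measurableI)
  fix \<omega> assume "\<omega> \<in> space (sigma (space P) G)"
  then have "\<omega> \<in> space P" using G by (simp add: space_measure_of)
  then show "D k p \<omega> \<in> space (PiM {1..d} (\<lambda>_. borel::real measure))"
    using measurable_space[OF D_meas] by blast
next
  fix A assume "A \<in> sets (PiM {1..d} (\<lambda>_. borel::real measure))"
  then show "D k p -` A \<inter> space (sigma (space P) G) \<in> sets (sigma (space P) G)"
    using pre G by (simp add: space_measure_of sets_measure_of)
qed

lemma Gs_indep: "indep_sets (Gs k) {1..Mn}"
  unfolding Gs_def
proof (rule indep_sets_collect_sigma)
  have "indep_sets (Ek k) {..<Mn*2^k}"
    using D_indep[of k] unfolding indep_vars_def2 Ek_def by blast
  moreover have "(\<Union>n\<in>{1..Mn}. blk k n) \<subseteq> {..<Mn*2^k}"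
  proof
    fix p assume "p \<in> (\<Union>n\<in>{1..Mn}. blk k n)"
    then obtain n where n: "n \<in> {1..Mn}" "p < n * 2^k" unfolding blk_def by auto
    have "n * 2^k \<le> Mn * 2^k" using n by auto
    then have "p < Mn * 2^k" using n(2) by linarith
    then show "p \<in> {..<Mn*2^k}" by simp
  qed
  ultimately show "indep_sets (Ek k) (\<Union>n\<in>{1..Mn}. blk k n)"
    by (rule indep_sets_mono_index[rotated])
next
  fix p n show "Int_stable (Ek k p)"
    unfolding Int_stable_def Ek_def
    apply auto
    apply (rule_tac x="A \<inter> Aa" in exI)
    apply auto
    done
next
  show "disjoint_family_on (blk k) {1..Mn}"
    unfolding disjoint_family_on_def
  proof (intro ballI impI)
    fix n n' assume nn: "n \<in> {1..Mn}" "n' \<in> {1..Mn}" "n \<noteq> n'"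
    show "blk k n \<inter> blk k n' = {}"
    proof (rule ccontr)
      assume "blk k n \<inter> blk k n' \<noteq> {}"
      then obtain p where "p \<in> blk k n" "p \<in> blk k n'" by blast
      then have p: "(n-1)*2^k \<le> p" "p < n*2^k" "(n'-1)*2^k \<le> p" "p < n'*2^k"
        unfolding blk_def atLeastLessThan_iff by blast+
      have "(n'-1)*2^k < n*2^k" using p by linarith
      then have "n' - 1 < n" by simp
      moreover have "(n-1)*2^k < n'*2^k" using p by linarith
      then have "n - 1 < n'" by simp
      ultimately show False using nn by auto
    qed
  qed
qed

lemma xg_double: "xg k p = xg (Suc k) (2 * p)"
  unfolding xg_def by (simp add: field_simps)

lemma D_split: "D k p \<omega> = restrict (\<lambda>j. D (Suc k) (2*p) \<omega> j + D (Suc k) (2*p+1) \<omega> j) {1..d}"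
proof -
  have "xg k (Suc p) = xg (Suc k) (Suc (2*p + 1))"
    using xg_double[of k "Suc p"] by simp
  then show ?thesis unfolding D_def using xg_double[of k p] by (auto simp: fun_eq_iff)
qed

lemma Gs_mono_Suc:
  assumes n: "n \<ge> 1"
  shows "Gs k n \<subseteq> Gs (Suc k) n"
proof -
  let ?G = "\<Union>p\<in>blk (Suc k) n. Ek (Suc k) p"
  have G: "?G \<subseteq> Pow (space P)" by (rule Ek_Pow)
  have Dm: "D (Suc k) q \<in> measurable (sigma (space P) ?G) (PiM {1..d} (\<lambda>_. borel::real measure))"
    if q: "q \<in> blk (Suc k) n" for q
  proof (rule D_meas_sigma[OF G])
    fix A assume "A \<in> sets (PiM {1..d} (\<lambda>_. borel::real measure))"
    then have "D (Suc k) q -` A \<inter> space P \<in> ?G" using q unfolding Ek_def by blast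
    then show "D (Suc k) q -` A \<inter> space P \<in> sigma_sets (space P) ?G" by auto
  qed
  have "Ek k p \<subseteq> sigma_sets (space P) ?G" if p: "p \<in> blk k n" for p
  proof
    fix E assume "E \<in> Ek k p"
    then obtain A where A: "A \<in> sets (PiM {1..d} (\<lambda>_. borel::real measure))" "E = D k p -` A \<inter> space P"
      unfolding Ek_def by auto
    have q: "2*p \<in> blk (Suc k) n" "2*p+1 \<in> blk (Suc k) n"
      using p unfolding blk_def by auto
    have "(\<lambda>\<omega>. restrict (\<lambda>j. D (Suc k) (2*p) \<omega> j + D (Suc k) (2*p+1) \<omega> j) {1..d})
        \<in> measurable (sigma (space P) ?G) (PiM {1..d} (\<lambda>_. borel::real measure))"
    proof (intro measurable_restrict borel_measurable_add)
      fix j assume j: "j \<in> {1..d}"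
      show "(\<lambda>\<omega>. D (Suc k) (2*p) \<omega> j) \<in> borel_measurable (sigma (space P) ?G)"
        using measurable_compose[OF Dm[OF q(1)] measurable_component_singleton[OF j]] by simp
      show "(\<lambda>\<omega>. D (Suc k) (2*p+1) \<omega> j) \<in> borel_measurable (sigma (space P) ?G)"
        using measurable_compose[OF Dm[OF q(2)] measurable_component_singleton[OF j]] by simp
    qed
    moreover have "D k p = (\<lambda>\<omega>. restrict (\<lambda>j. D (Suc k) (2*p) \<omega> j + D (Suc k) (2*p+1) \<omega> j) {1..d})"
      by (rule ext, rule D_split)
    ultimately have "D k p \<in> measurable (sigma (space P) ?G) (PiM {1..d} (\<lambda>_. borel::real measure))"
      by simp
    from measurable_sets[OF this A(1)] show "E \<in> sigma_sets (space P) ?G"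
      using A G by (simp add: space_measure_of sets_measure_of)
  qed
  then show ?thesis unfolding Gs_def by (intro sigma_sets_mono) auto
qed

lemma Gs_mono: "n \<ge> 1 \<Longrightarrow> k \<le> k' \<Longrightarrow> Gs k n \<subseteq> Gs k' n"
  using lift_Suc_mono_le[of "\<lambda>k. Gs k n"] Gs_mono_Suc by blast

lemma Hn_Int_stable: assumes n: "n \<ge> 1" shows "Int_stable (Hn n)"
  unfolding Int_stable_def
proof (intro ballI)
  fix A B assume "A \<in> Hn n" "B \<in> Hn n"
  then obtain k1 k2 where A: "A \<in> Gs k1 n" and B: "B \<in> Gs k2 n" unfolding Hn_def by blast
  have "A \<in> Gs (max k1 k2) n" "B \<in> Gs (max k1 k2) n"
    using Gs_mono[OF n, of k1 "max k1 k2"] Gs_mono[OF n, of k2 "max k1 k2"] A B by auto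
  moreover have "Gs (max k1 k2) n = sets (sigma (space P) (\<Union>p\<in>blk (max k1 k2) n. Ek (max k1 k2) p))"
    unfolding Gs_def using Ek_Pow by (simp add: sets_measure_of)
  ultimately have "A \<inter> B \<in> Gs (max k1 k2) n" by (metis sets.Int)
  then show "A \<inter> B \<in> Hn n" unfolding Hn_def by blast
qed

lemma Hn_indep0: "indep_sets Hn {1..Mn}"
proof (rule indep_setsI)
  fix n show "Hn n \<subseteq> events" unfolding Hn_def using Gs_events by auto
next
  fix A J assume J: "J \<noteq> {}" "J \<subseteq> {1..Mn}" "finite J" and A: "\<forall>j\<in>J. A j \<in> Hn j"
  have "\<forall>j\<in>J. \<exists>k. A j \<in> Gs k j" using A unfolding Hn_def by blast
  from bchoice[OF this] obtain kk where kk: "\<forall>j\<in>J. A j \<in> Gs (kk j) j" by blast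
  define K where "K = Max (kk ` J)"
  have "\<forall>j\<in>J. A j \<in> Gs K j"
  proof
    fix j assume j: "j \<in> J"
    have "kk j \<le> K" unfolding K_def using J j by auto
    moreover have "j \<ge> 1" using J(2) j by auto
    ultimately show "A j \<in> Gs K j" using Gs_mono[of j "kk j" K] kk j by blast
  qed
  then show "prob (\<Inter>j\<in>J. A j) = (\<Prod>j\<in>J. prob (A j))"
    using indep_setsD[OF Gs_indep[of K] J(2,1,3)] by blast
qed

lemma Hn_indep: "indep_sets (\<lambda>n. sigma_sets (space P) (Hn n)) {1..Mn}"
  by (rule indep_sets_sigma[OF Hn_indep0 Hn_Int_stable]) auto

lemma Hn_Pow: "Hn n \<subseteq> Pow (space P)"
  unfolding Hn_def using Gs_Pow by auto

lemma D_meas_Hn: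
  assumes "p \<in> blk k n"
  shows "D k p \<in> measurable (sigma (space P) (Hn n)) (PiM {1..d} (\<lambda>_. borel::real measure))"
proof (rule D_meas_sigma[OF Hn_Pow])
  fix A assume "A \<in> sets (PiM {1..d} (\<lambda>_. borel::real measure))"
  then have "D k p -` A \<inter> space P \<in> Gs k n"
    using assms unfolding Gs_def Ek_def by blast
  then show "D k p -` A \<inter> space P \<in> sigma_sets (space P) (Hn n)" unfolding Hn_def by blast
qed

end



lemma quad_swap:
  fixes u :: "nat \<Rightarrow> real" and h :: real and G :: "nat \<Rightarrow> nat \<Rightarrow> real" and s :: "nat \<Rightarrow> nat \<Rightarrow> real"
  shows "(\<Sum>p\<in>Pb. h * (\<Sum>j\<in>Jd. (\<Sum>i\<in>I. u i * G i p * s i j)^2)) =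
     (\<Sum>i\<in>I. \<Sum>i'\<in>I. u i * u i' * (\<Sum>j\<in>Jd. s i j * s i' j) * (\<Sum>p\<in>Pb. h * G i p * G i' p))"
proof -
  have "(\<Sum>p\<in>Pb. h * (\<Sum>j\<in>Jd. (\<Sum>i\<in>I. u i * G i p * s i j)^2))
     = (\<Sum>p\<in>Pb. \<Sum>j\<in>Jd. \<Sum>i\<in>I. \<Sum>i'\<in>I. h * (u i * G i p * s i j) * (u i' * G i' p * s i' j))"
  proof -
    have sq: "\<And>f::nat\<Rightarrow>real. (\<Sum>i\<in>I. f i)^2 = (\<Sum>i\<in>I. \<Sum>i'\<in>I. f i * f i')"
      by (simp add: power2_eq_square sum_product)
    show ?thesis by (simp only: sq sum_distrib_left mult.assoc)
  qed
  also have "\<dots> = (\<Sum>j\<in>Jd. \<Sum>p\<in>Pb. \<Sum>i\<in>I. \<Sum>i'\<in>I. h * (u i * G i p * s i j) * (u i' * G i' p * s i' j))"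
    by (rule sum.swap)
  also have "\<dots> = (\<Sum>j\<in>Jd. \<Sum>i\<in>I. \<Sum>p\<in>Pb. \<Sum>i'\<in>I. h * (u i * G i p * s i j) * (u i' * G i' p * s i' j))"
    by (intro sum.cong refl sum.swap)
  also have "\<dots> = (\<Sum>j\<in>Jd. \<Sum>i\<in>I. \<Sum>i'\<in>I. \<Sum>p\<in>Pb. h * (u i * G i p * s i j) * (u i' * G i' p * s i' j))"
    by (intro sum.cong refl sum.swap)
  also have "\<dots> = (\<Sum>i\<in>I. \<Sum>j\<in>Jd. \<Sum>i'\<in>I. \<Sum>p\<in>Pb. h * (u i * G i p * s i j) * (u i' * G i' p * s i' j))"
    by (rule sum.swap)
  also have "\<dots> = (\<Sum>i\<in>I. \<Sum>i'\<in>I. \<Sum>j\<in>Jd. \<Sum>p\<in>Pb. h * (u i * G i p * s i j) * (u i' * G i' p * s i' j))"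
    by (intro sum.cong refl sum.swap)
  also have "\<dots> = (\<Sum>i\<in>I. \<Sum>i'\<in>I. u i * u i' * (\<Sum>j\<in>Jd. s i j * s i' j) * (\<Sum>p\<in>Pb. h * G i p * G i' p))"
  proof (intro sum.cong refl)
    fix i i'
    have "u i * u i' * (\<Sum>j\<in>Jd. s i j * s i' j) * (\<Sum>p\<in>Pb. h * G i p * G i' p)
       = (u i * u i') * ((\<Sum>j\<in>Jd. s i j * s i' j) * (\<Sum>p\<in>Pb. h * G i p * G i' p))"
      by (simp only: mult.assoc)
    also have "\<dots> = (\<Sum>j\<in>Jd. \<Sum>p\<in>Pb. (u i * u i') * ((s i j * s i' j) * (h * G i p * G i' p)))"
      by (subst sum_product) (simp only: sum_distrib_left)
    also have "\<dots> = (\<Sum>j\<in>Jd. \<Sum>p\<in>Pb. h * (u i * G i p * s i j) * (u i' * G i' p * s i' j))"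
      by (intro sum.cong refl) (simp only: mult_ac)
    finally show "(\<Sum>j\<in>Jd. \<Sum>p\<in>Pb. h * (u i * G i p * s i j) * (u i' * G i' p * s i' j)) =
        u i * u i' * (\<Sum>j\<in>Jd. s i j * s i' j) * (\<Sum>p\<in>Pb. h * G i p * G i' p)" by simp
  qed
  finally show ?thesis .
qed

context bm_setup
begin

definition Sk :: "(nat \<Rightarrow> real \<Rightarrow> real) \<Rightarrow> (nat \<Rightarrow> nat \<Rightarrow> real) \<Rightarrow> nat \<Rightarrow> nat \<Rightarrow> 'a \<Rightarrow> nat \<Rightarrow> real" where
  "Sk g s k n \<omega> i = (\<Sum>p\<in>blk k n. g i (xg k p) * (\<Sum>j\<in>{1..d}. s i j * D k p \<omega> j))"

lemma D_comp_meas: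
  assumes "D k p \<in> measurable Mx (PiM {1..d} (\<lambda>_. borel::real measure))" "j \<in> {1..d}"
  shows "(\<lambda>\<omega>. D k p \<omega> j) \<in> borel_measurable Mx"
  using measurable_compose[OF assms(1) measurable_component_singleton[OF assms(2)]] by simp

lemma Sk_meas_Hn: "(\<lambda>\<omega>. Sk g s k n \<omega> i) \<in> borel_measurable (sigma (space P) (Hn n))"
  unfolding Sk_def
  by (intro borel_measurable_sum borel_measurable_times measurable_const D_comp_meas D_meas_Hn) auto

lemma Sk_meas: "(\<lambda>\<omega>. Sk g s k n \<omega> i) \<in> borel_measurable P"
  unfolding Sk_def
  by (intro borel_measurable_sum borel_measurable_times measurable_const D_comp_meas D_meas) auto

lemma blk_sub: "n \<le> Mn \<Longrightarrow> blk k n \<subseteq> {..<Mn*2^k}"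
proof
  fix p assume n: "n \<le> Mn" and "p \<in> blk k n"
  then have "p < n * 2^k" unfolding blk_def by auto
  moreover have "n * 2^k \<le> Mn * 2^k" using n by auto
  ultimately have "p < Mn*2^k" by linarith
  then show "p \<in> {..<Mn*2^k}" by simp
qed

lemma Sk_char:
  assumes n: "n \<le> Mn" and I: "finite I"
  shows "(\<integral>\<omega>. cis (\<Sum>i\<in>I. u i * Sk g s k n \<omega> i) \<partial>P) =
    complex_of_real (exp (- (\<Sum>i\<in>I. \<Sum>i'\<in>I. u i * u i' * (\<Sum>j\<in>{1..d}. s i j * s i' j) *
         (\<Sum>p\<in>blk k n. (T / (real Mn * 2^k)) * g i (xg k p) * g i' (xg k p))) / 2))"
proof -
  define v where "v p j = (\<Sum>i\<in>I. u i * g i (xg k p) * s i j)" for p j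
  have fin: "finite (blk k n)" unfolding blk_def by auto
  have lin: "(\<Sum>i\<in>I. u i * Sk g s k n \<omega> i) = (\<Sum>p\<in>blk k n. \<Sum>j\<in>{1..d}. v p j * D k p \<omega> j)" for \<omega>
  proof -
    have "(\<Sum>i\<in>I. u i * Sk g s k n \<omega> i) = (\<Sum>i\<in>I. \<Sum>p\<in>blk k n. \<Sum>j\<in>{1..d}. u i * g i (xg k p) * s i j * D k p \<omega> j)"
      unfolding Sk_def by (simp add: sum_distrib_left mult.assoc)
    also have "\<dots> = (\<Sum>p\<in>blk k n. \<Sum>i\<in>I. \<Sum>j\<in>{1..d}. u i * g i (xg k p) * s i j * D k p \<omega> j)"
      by (rule sum.swap)
    also have "\<dots> = (\<Sum>p\<in>blk k n. \<Sum>j\<in>{1..d}. \<Sum>i\<in>I. u i * g i (xg k p) * s i j * D k p \<omega> j)"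
      by (intro sum.cong refl sum.swap)
    also have "\<dots> = (\<Sum>p\<in>blk k n. \<Sum>j\<in>{1..d}. v p j * D k p \<omega> j)"
      unfolding v_def by (simp add: sum_distrib_right)
    finally show ?thesis .
  qed
  have ind: "indep_vars (\<lambda>_. borel) (\<lambda>p \<omega>. cis (\<Sum>j\<in>{1..d}. v p j * D k p \<omega> j)) (blk k n)"
  proof -
    have "indep_vars (\<lambda>_. PiM {1..d} (\<lambda>_. borel::real measure)) (D k) (blk k n)"
      using indep_vars_subset[OF D_indep blk_sub[OF n]] .
    then show ?thesis
      by (rule indep_vars_compose2[where Y="\<lambda>p x. cis (\<Sum>j\<in>{1..d}. v p j * x j)"]) (auto intro: cis_lin_meas)
  qed
  have int: "integrable P (\<lambda>\<omega>. cis (\<Sum>j\<in>{1..d}. v p j * D k p \<omega> j))" for p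
  proof (rule integrable_const_bound[where B=1])
    show "AE x in P. norm (cis (\<Sum>j\<in>{1..d}. v p j * D k p x j)) \<le> 1" by simp
    show "(\<lambda>\<omega>. cis (\<Sum>j\<in>{1..d}. v p j * D k p \<omega> j)) \<in> borel_measurable P"
      using measurable_compose[OF D_meas cis_lin_meas[of "{1..d}" "v p"]] by simp
  qed
  have "(\<integral>\<omega>. cis (\<Sum>i\<in>I. u i * Sk g s k n \<omega> i) \<partial>P)
      = (\<integral>\<omega>. (\<Prod>p\<in>blk k n. cis (\<Sum>j\<in>{1..d}. v p j * D k p \<omega> j)) \<partial>P)"
    unfolding lin cis_sum ..
  also have "\<dots> = (\<Prod>p\<in>blk k n. \<integral>\<omega>. cis (\<Sum>j\<in>{1..d}. v p j * D k p \<omega> j) \<partial>P)"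
    by (rule indep_vars_lebesgue_integral[OF fin ind int])
  also have "\<dots> = (\<Prod>p\<in>blk k n. complex_of_real (exp (- (T / (real Mn * 2^k)) * (\<Sum>j\<in>{1..d}. (v p j)^2) / 2)))"
    by (intro prod.cong refl D_char)
  also have "\<dots> = complex_of_real (exp (\<Sum>p\<in>blk k n. - (T / (real Mn * 2^k)) * (\<Sum>j\<in>{1..d}. (v p j)^2) / 2))"
    by (simp add: exp_sum fin)
  also have "(\<Sum>p\<in>blk k n. - (T / (real Mn * 2^k)) * (\<Sum>j\<in>{1..d}. (v p j)^2) / 2)
      = - (\<Sum>p\<in>blk k n. (T / (real Mn * 2^k)) * (\<Sum>j\<in>{1..d}. (v p j)^2)) / 2"
    by (simp add: sum_divide_distrib sum_negf)
  also have "(\<Sum>p\<in>blk k n. (T / (real Mn * 2^k)) * (\<Sum>j\<in>{1..d}. (v p j)^2))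
     = (\<Sum>i\<in>I. \<Sum>i'\<in>I. u i * u i' * (\<Sum>j\<in>{1..d}. s i j * s i' j) *
         (\<Sum>p\<in>blk k n. (T / (real Mn * 2^k)) * g i (xg k p) * g i' (xg k p)))"
    unfolding v_def by (rule quad_swap[where G="\<lambda>i p. g i (xg k p)"])
  finally show ?thesis .
qed

lemma blk_shift: "n \<ge> 1 \<Longrightarrow> (\<Sum>p\<in>blk k n. f p) = (\<Sum>l<(2::nat)^k. f ((n-1)*2^k + l))"
proof -
  assume n: "n \<ge> 1"
  have "n * 2^k = 2^k + (n-1)*2^k" using n by (cases n) auto
  then have "blk k n = {0 + (n-1)*2^k..<2^k + (n-1)*2^k}" unfolding blk_def by simp
  then have "(\<Sum>p\<in>blk k n. f p) = (\<Sum>l\<in>{0..<2^k}. f (l + (n-1)*2^k))"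
    by (simp only: sum.shift_bounds_nat_ivl)
  then show ?thesis by (simp add: atLeast0LessThan add.commute)
qed

lemma xg_local:
  assumes n: "n \<ge> 1"
  shows "xg k ((n-1)*2^k + l) = (real n - 1) * T / real Mn
            + real l * ((real n * T / real Mn - (real n - 1) * T / real Mn) / 2^k)"
proof -
  have "real (n - 1) = real n - 1" using n by auto
  then show ?thesis unfolding xg_def using Mpos by (simp add: field_simps)
qed

end



context bm_setup
begin

lemma W_cont: "\<omega> \<in> space P \<Longrightarrow> j \<in> {1..d} \<Longrightarrow> continuous_on {0..} (\<lambda>t. W t \<omega> j)"
  using BM unfolding std_brownian_def by blast

lemma Sk_local:
  assumes n: "n \<ge> 1"
  shows "Sk gg s k n \<omega> i = (\<Sum>l<(2::nat)^k.
     gg i ((real n - 1) * T / real Mn + real l * ((real n * T / real Mn - (real n - 1) * T / real Mn) / 2^k)) *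
      ((\<Sum>j\<in>{1..d}. s i j * W ((real n - 1) * T / real Mn + real (Suc l) * ((real n * T / real Mn - (real n - 1) * T / real Mn) / 2^k)) \<omega> j)
     - (\<Sum>j\<in>{1..d}. s i j * W ((real n - 1) * T / real Mn + real l * ((real n * T / real Mn - (real n - 1) * T / real Mn) / 2^k)) \<omega> j)))"
proof -
  have "Sk gg s k n \<omega> i = (\<Sum>l<(2::nat)^k. gg i (xg k ((n-1)*2^k + l)) *
      (\<Sum>j\<in>{1..d}. s i j * D k ((n-1)*2^k + l) \<omega> j))"
    unfolding Sk_def using blk_shift[OF n] by simp
  also have "\<dots> = (\<Sum>l<(2::nat)^k. gg i (xg k ((n-1)*2^k + l)) *
      ((\<Sum>j\<in>{1..d}. s i j * W (xg k ((n-1)*2^k + Suc l)) \<omega> j) - (\<Sum>j\<in>{1..d}. s i j * W (xg k ((n-1)*2^k + l)) \<omega> j)))"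
    unfolding D_def by (intro sum.cong refl arg_cong2[where f="(*)"]) (auto simp: sum_subtractf[symmetric] right_diff_distrib)
  finally show ?thesis unfolding xg_local[OF n] .
qed

lemma Sk_conv:
  fixes gg gg' :: "nat \<Rightarrow> real \<Rightarrow> real" and s :: "nat \<Rightarrow> nat \<Rightarrow> real"
  assumes n: "1 \<le> n" "n \<le> Mn" and \<omega>: "\<omega> \<in> space P"
    and gc: "continuous_on {(real n - 1) * T / real Mn..real n * T / real Mn} (gg' i)"
    and dg: "\<And>x. x \<in> {(real n - 1) * T / real Mn..real n * T / real Mn} \<Longrightarrow> (gg i has_real_derivative gg' i x) (at x)"
  shows "(\<lambda>k. Sk gg s k n \<omega> i) \<longlonglongrightarrow>
     gg i (real n * T / real Mn) * (\<Sum>j\<in>{1..d}. s i j * W (real n * T / real Mn) \<omega> j)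
   - gg i ((real n - 1) * T / real Mn) * (\<Sum>j\<in>{1..d}. s i j * W ((real n - 1) * T / real Mn) \<omega> j)
   - integral {(real n - 1) * T / real Mn..real n * T / real Mn} (\<lambda>t. gg' i t * (\<Sum>j\<in>{1..d}. s i j * W t \<omega> j))"
proof -
  let ?a = "(real n - 1) * T / real Mn" and ?b = "real n * T / real Mn"
  have ab: "?a < ?b" using Tpos Mpos by (simp add: divide_strict_right_mono)
  have a0: "0 \<le> ?a" using n Tpos by auto
  have Yc: "continuous_on {?a..?b} (\<lambda>t. \<Sum>j\<in>{1..d}. s i j * W t \<omega> j)"
    by (intro continuous_intros continuous_on_subset[OF W_cont[OF \<omega>]]) (use a0 in auto)
  show ?thesis unfolding Sk_local[OF n(1)]
    by (rule stieltjes_sum[OF ab Yc gc dg])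
qed

lemma Rk_conv:
  assumes n: "1 \<le> n" and F: "continuous_on {(real n - 1) * T / real Mn..real n * T / real Mn} F"
  shows "(\<lambda>k. \<Sum>p\<in>blk k n. (T / (real Mn * 2^k)) * F (xg k p)) \<longlonglongrightarrow>
      integral {(real n - 1) * T / real Mn..real n * T / real Mn} F"
proof -
  let ?a = "(real n - 1) * T / real Mn" and ?b = "real n * T / real Mn"
  have ab: "?a < ?b" using Tpos Mpos by (simp add: divide_strict_right_mono)
  have h: "T / (real Mn * 2^k) = (?b - ?a) / 2^k" for k :: nat
    using Mpos by (simp add: field_simps)
  show ?thesis
    unfolding blk_shift[OF n] xg_local[OF n] h
    by (rule riemann_sum[OF ab F])
qed

end



lemma cis_borel: "cis \<in> borel_measurable borel"
  by (intro borel_measurable_continuous_onI continuous_on_cis continuous_on_id)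

theorem proposition1:
  fixes P :: "'a measure"
    and N M :: nat
    and r T :: real
    and Tm muF muS etaF etaS :: "nat \<Rightarrow> real"
    and St :: "nat \<Rightarrow> nat \<Rightarrow> real"
    and W Z :: "real \<Rightarrow> 'a \<Rightarrow> nat \<Rightarrow> real"
  assumes "prob_space P"
    and "N \<ge> 1" and "r \<ge> 0" and "T > 0"
    and "\<forall>i\<in>{1..N}. T < Tm i"
    and "\<forall>i\<in>{1..2*N}. \<forall>j\<in>{1..2*N}. i < j \<longrightarrow> St i j = 0"
    and "\<forall>x::nat \<Rightarrow> real. (\<exists>i\<in>{1..2*N}. x i \<noteq> 0) \<longrightarrow>
           (\<Sum>i=1..2*N. \<Sum>j=1..2*N. x i * Sigma N St i j * x j) > 0"
    and "\<forall>i\<in>{1..N}. etaF i < etaS i"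
    and "std_brownian P (2*N) W"
    and "\<forall>\<omega>\<in>space P. \<forall>i\<in>{1..N}. continuous_on {0..T} (\<lambda>t. Z t \<omega> i) \<and>
           (\<forall>t\<in>{0..T}. Z t \<omega> i = Z 0 \<omega> i
              + integral {0..t} (\<lambda>s. drift_m N r St muF muS i
                                    - kappa etaF etaS i / (Tm i - s) * Z s \<omega> i)
              + (\<Sum>j=1..2*N. SigmaZt N St i j * W t \<omega> j))"
    and "M \<ge> 1"
  shows "prob_space.indep_vars P (\<lambda>_. PiM {1..N} (\<lambda>_. borel))
           (\<lambda>n \<omega>. restrict (epsZ T M Tm (kappa etaF etaS) (drift_m N r St muF muS) Z n \<omega>) {1..N})
           {1..M}
       \<and> (\<forall>n\<in>{1..M}.
            gaussian_vec P {1..N} (epsZ T M Tm (kappa etaF etaS) (drift_m N r St muF muS) Z n)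
              (\<lambda>_. 0) (covc T M Tm (kappa etaF etaS) (betaZ N St) n))"
proof -
  note PS = assms(1) and Tpos = assms(4) and TTm = assms(5) and BM = assms(9) and Zeq = assms(10) and Mpos = assms(11)
  interpret prob_space P by (rule PS)
  have "bm_setup P (2*N) W T M"
    unfolding bm_setup_def bm_setup_axioms_def using PS BM Tpos Mpos by auto
  then interpret B: bm_setup P "2*N" W T M .
  define \<kappa> where "\<kappa> = kappa etaF etaS"
  define mZ where "mZ = drift_m N r St muF muS"
  define \<sigma> where "\<sigma> = SigmaZt N St"
  define gg where "gg = (\<lambda>i. gk (Tm i) (\<kappa> i))"
  define gg' where "gg' = (\<lambda>i. gk' (Tm i) (\<kappa> i))"
  define eps where "eps = epsZ T M Tm \<kappa> mZ Z"
  define a where "a = (\<lambda>n::nat. (real n - 1) * T / real M)"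
  define b where "b = (\<lambda>n::nat. real n * T / real M)"
  have Tm: "T < Tm i" "0 < Tm i" if "i \<in> {1..N}" for i
  proof -
    show "T < Tm i" using TTm that by blast
    then show "0 < Tm i" using Tpos by linarith
  qed
  have ab: "0 \<le> a n" "a n < b n" "b n \<le> T" if n: "n \<in> {1..M}" for n
  proof -
    show "0 \<le> a n" using n Tpos unfolding a_def by auto
    show "a n < b n" using Tpos Mpos unfolding a_def b_def by (simp add: divide_strict_right_mono)
    have "real n * T \<le> real M * T" using n Tpos by (intro mult_right_mono) auto
    then show "b n \<le> T" unfolding b_def using Mpos by (simp add: divide_le_eq mult.commute)
  qed
  have conv: "(\<lambda>k. B.Sk gg \<sigma> k n \<omega> i) \<longlonglongrightarrow> eps n \<omega> i"
    if n: "n \<in> {1..M}" and \<omega>: "\<omega> \<in> space P" and i: "i \<in> {1..N}" for n \<omega> i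
  proof -
    have n1: "1 \<le> n" "n \<le> M" using n by auto
    have gc: "continuous_on {a n..b n} (gg' i)"
      unfolding gg'_def using Tm[OF i] ab[OF n] by (intro gk'_cont) auto
    have dg: "(gg i has_real_derivative gg' i x) (at x)" if "x \<in> {a n..b n}" for x
      unfolding gg_def gg'_def using Tm[OF i] ab[OF n] that by (intro gk_deriv) auto
    have lim: "(\<lambda>k. B.Sk gg \<sigma> k n \<omega> i) \<longlonglongrightarrow>
     gg i (b n) * (\<Sum>j\<in>{1..2*N}. \<sigma> i j * W (b n) \<omega> j)
   - gg i (a n) * (\<Sum>j\<in>{1..2*N}. \<sigma> i j * W (a n) \<omega> j)
   - integral {a n..b n} (\<lambda>t. gg' i t * (\<Sum>j\<in>{1..2*N}. \<sigma> i j * W t \<omega> j))"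
      using B.Sk_conv[OF n1 \<omega>, of gg' i gg \<sigma>] gc dg unfolding a_def b_def by blast
    have Zc: "continuous_on {0..T} (\<lambda>t. Z t \<omega> i)" using Zeq \<omega> i by blast
    have Yc: "continuous_on {0..T} (\<lambda>t. \<Sum>j\<in>{1..2*N}. \<sigma> i j * W t \<omega> j)"
      by (intro continuous_intros continuous_on_subset[OF B.W_cont[OF \<omega>]]) auto
    have eq: "\<forall>t\<in>{0..T}. Z t \<omega> i = Z 0 \<omega> i + integral {0..t} (\<lambda>s. mZ i - \<kappa> i / (Tm i - s) * Z s \<omega> i)
          + (\<Sum>j\<in>{1..2*N}. \<sigma> i j * W t \<omega> j)"
      using Zeq \<omega> i unfolding mZ_def \<kappa>_def \<sigma>_def by blast
    note pid = path_identity[OF ab(1)[OF n] less_imp_le[OF ab(2)[OF n]] ab(3)[OF n] Tm[OF i] Zc Yc eq]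
    have "eps n \<omega> i = gk (Tm i) (\<kappa> i) (b n) * Z (b n) \<omega> i - gk (Tm i) (\<kappa> i) (a n) * Z (a n) \<omega> i
        - Phi (Tm i) (\<kappa> i) (a n) (b n) * mZ i"
      unfolding eps_def epsZ_def gk_def phi_def Phi_def a_def b_def by simp
    also have "\<dots> = gg i (b n) * (\<Sum>j\<in>{1..2*N}. \<sigma> i j * W (b n) \<omega> j)
   - gg i (a n) * (\<Sum>j\<in>{1..2*N}. \<sigma> i j * W (a n) \<omega> j)
   - integral {a n..b n} (\<lambda>t. gg' i t * (\<Sum>j\<in>{1..2*N}. \<sigma> i j * W t \<omega> j))"
      using pid unfolding gg_def gg'_def by simp
    finally show ?thesis using lim by simp
  qed
  have measP: "(\<lambda>\<omega>. eps n \<omega> i) \<in> borel_measurable P" if n: "n \<in> {1..M}" and i: "i \<in> {1..N}" for n i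
    by (rule borel_measurable_LIMSEQ_real[OF conv[OF n _ i] B.Sk_meas])
  have measH: "(\<lambda>\<omega>. eps n \<omega> i) \<in> borel_measurable (sigma (space P) (B.Hn n))"
    if n: "n \<in> {1..M}" and i: "i \<in> {1..N}" for n i
  proof (rule borel_measurable_LIMSEQ_real[OF _ B.Sk_meas_Hn])
    fix \<omega> assume "\<omega> \<in> space (sigma (space P) (B.Hn n))"
    then have "\<omega> \<in> space P" using B.Hn_Pow by (simp add: space_measure_of)
    then show "(\<lambda>k. B.Sk gg \<sigma> k n \<omega> i) \<longlonglongrightarrow> eps n \<omega> i" by (rule conv[OF n _ i])
  qed
  have indep: "indep_vars (\<lambda>_. PiM {1..N} (\<lambda>_. borel)) (\<lambda>n \<omega>. restrict (eps n \<omega>) {1..N}) {1..M}"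
    unfolding indep_vars_def2
  proof
    show "\<forall>n\<in>{1..M}. random_variable (PiM {1..N} (\<lambda>_. borel)) (\<lambda>\<omega>. restrict (eps n \<omega>) {1..N})"
      using measP by (auto intro!: measurable_restrict)
    show "indep_sets (\<lambda>n. {(\<lambda>\<omega>. restrict (eps n \<omega>) {1..N}) -` A \<inter> space P |A. A \<in> sets (PiM {1..N} (\<lambda>_. borel))}) {1..M}"
    proof (rule indep_sets_mono_sets[OF B.Hn_indep])
      fix n assume n: "n \<in> {1..M}"
      have m: "(\<lambda>\<omega>. restrict (eps n \<omega>) {1..N}) \<in> measurable (sigma (space P) (B.Hn n)) (PiM {1..N} (\<lambda>_. borel::real measure))"
        using measH[OF n] by (auto intro!: measurable_restrict)
      show "{(\<lambda>\<omega>. restrict (eps n \<omega>) {1..N}) -` A \<inter> space P |A. A \<in> sets (PiM {1..N} (\<lambda>_. borel))}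
          \<subseteq> sigma_sets (space P) (B.Hn n)"
      proof clarify
        fix A :: "(nat \<Rightarrow> real) set" assume "A \<in> sets (PiM {1..N} (\<lambda>_. borel))"
        from measurable_sets[OF m this]
        show "(\<lambda>\<omega>. restrict (eps n \<omega>) {1..N}) -` A \<inter> space P \<in> sigma_sets (space P) (B.Hn n)"
          using B.Hn_Pow by (simp add: space_measure_of sets_measure_of)
      qed
    qed
  qed
  have gauss: "gaussian_vec P {1..N} (eps n) (\<lambda>_. 0) (covc T M Tm \<kappa> (betaZ N St) n)" if n: "n \<in> {1..M}" for n
    unfolding gaussian_vec_def
  proof (intro conjI ballI allI)
    fix i assume "i \<in> {1..N}" then show "(\<lambda>\<omega>. eps n \<omega> i) \<in> borel_measurable P" by (rule measP[OF n])
  next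
    fix u :: "nat \<Rightarrow> real"
    have n1: "1 \<le> n" "n \<le> M" using n by auto
    define \<beta> where "\<beta> i i' = (\<Sum>j\<in>{1..2*N}. \<sigma> i j * \<sigma> i' j)" for i i'
    define R where "R k i i' = (\<Sum>p\<in>B.blk k n. (T / (real M * 2^k)) * gg i (B.xg k p) * gg i' (B.xg k p))" for k i i'
    define Q where "Q i i' = integral {a n..b n} (\<lambda>t. gg i t * gg i' t)" for i i'
    have lhs: "(\<lambda>k. \<integral>\<omega>. cis (\<Sum>i\<in>{1..N}. u i * B.Sk gg \<sigma> k n \<omega> i) \<partial>P)
        \<longlonglongrightarrow> (\<integral>\<omega>. cis (\<Sum>i\<in>{1..N}. u i * eps n \<omega> i) \<partial>P)"
    proof (rule integral_dominated_convergence[where w="\<lambda>_. 1"])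
      show "(\<lambda>\<omega>. cis (\<Sum>i\<in>{1..N}. u i * eps n \<omega> i)) \<in> borel_measurable P"
        by (rule measurable_compose[OF _ cis_borel]) (auto intro!: borel_measurable_sum borel_measurable_times measP[OF n])
      show "(\<lambda>\<omega>. cis (\<Sum>i\<in>{1..N}. u i * B.Sk gg \<sigma> k n \<omega> i)) \<in> borel_measurable P" for k
        by (rule measurable_compose[OF _ cis_borel]) (auto intro!: borel_measurable_sum borel_measurable_times B.Sk_meas)
      show "integrable P (\<lambda>_. 1::real)" by simp
      show "AE \<omega> in P. (\<lambda>k. cis (\<Sum>i\<in>{1..N}. u i * B.Sk gg \<sigma> k n \<omega> i)) \<longlonglongrightarrow> cis (\<Sum>i\<in>{1..N}. u i * eps n \<omega> i)"
        by (intro AE_I2 tendsto_cis tendsto_sum tendsto_mult tendsto_const conv[OF n]) auto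
      show "AE \<omega> in P. norm (cis (\<Sum>i\<in>{1..N}. u i * B.Sk gg \<sigma> k n \<omega> i)) \<le> 1" for k
        by simp
    qed
    have eqk: "(\<integral>\<omega>. cis (\<Sum>i\<in>{1..N}. u i * B.Sk gg \<sigma> k n \<omega> i) \<partial>P)
       = complex_of_real (exp (- (\<Sum>i\<in>{1..N}. \<Sum>i'\<in>{1..N}. u i * u i' * \<beta> i i' * R k i i') / 2))" for k
      unfolding \<beta>_def R_def by (rule B.Sk_char[OF n1(2)]) simp
    have Rlim: "(\<lambda>k. R k i i') \<longlonglongrightarrow> Q i i'" if i: "i \<in> {1..N}" and i': "i' \<in> {1..N}" for i i'
    proof -
      have c: "continuous_on {a n..b n} (\<lambda>t. gg i t * gg i' t)"
        unfolding gg_def using Tm[OF i] Tm[OF i'] ab[OF n] by (intro continuous_intros gk_cont) auto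
      show ?thesis
        using B.Rk_conv[OF n1(1), of "\<lambda>t. gg i t * gg i' t"] c
        unfolding R_def Q_def a_def b_def by (simp add: mult.assoc)
    qed
    have rhs: "(\<lambda>k. complex_of_real (exp (- (\<Sum>i\<in>{1..N}. \<Sum>i'\<in>{1..N}. u i * u i' * \<beta> i i' * R k i i') / 2)))
        \<longlonglongrightarrow> complex_of_real (exp (- (\<Sum>i\<in>{1..N}. \<Sum>i'\<in>{1..N}. u i * u i' * \<beta> i i' * Q i i') / 2))"
      by (intro tendsto_of_real tendsto_exp tendsto_divide tendsto_minus tendsto_sum tendsto_mult tendsto_const Rlim) auto
    have eqlim: "(\<integral>\<omega>. cis (\<Sum>i\<in>{1..N}. u i * eps n \<omega> i) \<partial>P)
        = complex_of_real (exp (- (\<Sum>i\<in>{1..N}. \<Sum>i'\<in>{1..N}. u i * u i' * \<beta> i i' * Q i i') / 2))"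
      using LIMSEQ_unique[OF lhs] rhs unfolding eqk by blast
    have cov: "(\<Sum>i\<in>{1..N}. \<Sum>j\<in>{1..N}. u i * covc T M Tm \<kappa> (betaZ N St) n i j * u j)
       = (\<Sum>i\<in>{1..N}. \<Sum>i'\<in>{1..N}. u i * u i' * \<beta> i i' * Q i i')"
    proof (intro sum.cong refl)
      fix i j
      have "covc T M Tm \<kappa> (betaZ N St) n i j = \<beta> i j * Q i j"
        unfolding covc_def \<beta>_def Q_def betaZ_def \<sigma>_def gg_def gk_def a_def b_def by simp
      then show "u i * covc T M Tm \<kappa> (betaZ N St) n i j * u j = u i * u j * \<beta> i j * Q i j"
        by (simp add: mult_ac)
    qed
    show "(\<integral>\<omega>. cis (\<Sum>i\<in>{1..N}. u i * eps n \<omega> i) \<partial>P) =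
        cis (\<Sum>i\<in>{1..N}. u i * 0) *
        complex_of_real (exp (- (\<Sum>i\<in>{1..N}. \<Sum>j\<in>{1..N}. u i * covc T M Tm \<kappa> (betaZ N St) n i j * u j) / 2))"
      unfolding eqlim cov by simp
  qed
  show ?thesis using indep gauss unfolding eps_def \<kappa>_def mZ_def by blast
qed



end
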